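(* Let $R$ be a commutative ring with identity, $I$ an ideal of $R$ and $M$ an $R$-module. If $M$ is $I$-prime, then the submodule $\Gamma_I(M)$ of $M$ is an $I$-coprime $R$-module. If $M$ is $I$-coprime, then the $R$-module $\Lambda_I(M)$ is an $I$-prime $R$-module.
   Context: All rings are commutative with identity and modules are unital. An $R$-module $M$ is $I$-prime if for all $m\in M$, $Im=0$ implies $m=0$ or $IM=0$; it is $I$-coprime if $IM=0$ or $IM=M$. $\Gamma_I(M)=\{m\in M : I^k m=0 \text{ for some } k\geq 1\}$ and $\Lambda_I(M)=\varprojlim_k M/I^kM$. *)

theory Defs
  imports Complex_Main
begin

definition is_ideal :: "'r::comm_ring_1 set \<Rightarrow> bool" where
  "is_ideal I \<longleftrightarrow> 0 \<in> I \<and> (\<forall>a\<in>I. \<forall>b\<in>I. a + b \<in> I) \<and> (\<forall>r. \<forall>a\<in>I. r * a \<in> I)"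

text \<open>For an additive structure (carrier N, addition ad, zero z) with scalar action sc,
  the submodule I N generated by all sc a m with a in I, m in N: the set of finite sums
  of such products.\<close>
inductive_set ideal_smul :: "'r set \<Rightarrow> ('r \<Rightarrow> 'n \<Rightarrow> 'n) \<Rightarrow> ('n \<Rightarrow> 'n \<Rightarrow> 'n) \<Rightarrow> 'n \<Rightarrow> 'n set \<Rightarrow> 'n set"
  for I sc ad z N where
  zero: "z \<in> ideal_smul I sc ad z N"
| step: "a \<in> I \<Longrightarrow> m \<in> N \<Longrightarrow> x \<in> ideal_smul I sc ad z N \<Longrightarrow> ad (sc a m) x \<in> ideal_smul I sc ad z N"

fun ideal_pow :: "'r::comm_ring_1 set \<Rightarrow> nat \<Rightarrow> 'r set" where
  "ideal_pow I 0 = UNIV"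
| "ideal_pow I (Suc k) = ideal_smul I (*) (+) 0 (ideal_pow I k)"

definition I_prime :: "'r set \<Rightarrow> ('r \<Rightarrow> 'n \<Rightarrow> 'n) \<Rightarrow> ('n \<Rightarrow> 'n \<Rightarrow> 'n) \<Rightarrow> 'n \<Rightarrow> 'n set \<Rightarrow> bool" where
  "I_prime I sc ad z N \<longleftrightarrow>
     (\<forall>m\<in>N. (\<forall>a\<in>I. sc a m = z) \<longrightarrow> m = z \<or> ideal_smul I sc ad z N = {z})"

definition I_coprime :: "'r set \<Rightarrow> ('r \<Rightarrow> 'n \<Rightarrow> 'n) \<Rightarrow> ('n \<Rightarrow> 'n \<Rightarrow> 'n) \<Rightarrow> 'n \<Rightarrow> 'n set \<Rightarrow> bool" where
  "I_coprime I sc ad z N \<longleftrightarrow> ideal_smul I sc ad z N = {z} \<or> ideal_smul I sc ad z N = N"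

definition Gamma :: "'r::comm_ring_1 set \<Rightarrow> ('r \<Rightarrow> 'm::ab_group_add \<Rightarrow> 'm) \<Rightarrow> 'm set" where
  "Gamma I sc = {m. \<exists>k\<ge>1. \<forall>a\<in>ideal_pow I k. sc a m = 0}"

definition powM :: "'r::comm_ring_1 set \<Rightarrow> ('r \<Rightarrow> 'm::ab_group_add \<Rightarrow> 'm) \<Rightarrow> nat \<Rightarrow> 'm set" where
  "powM I sc k = ideal_smul (ideal_pow I k) sc (+) 0 UNIV"

text \<open>Completion Lambda_I(M) = inverse limit of M / I^k M.  An element is a compatible family
  of cosets x k = m_k + I^k M, compatibility meaning that the projection
  M/I^(k+1)M \<rightarrow> M/I^k M sends x (k+1) to x k, i.e. x (k+1) \<subseteq> x k.\<close>
definition Lambda :: "'r::comm_ring_1 set \<Rightarrow> ('r \<Rightarrow> 'm::ab_group_add \<Rightarrow> 'm) \<Rightarrow> (nat \<Rightarrow> 'm set) set" where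
  "Lambda I sc = {x. (\<forall>k. \<exists>m. x k = {m + c |c. c \<in> powM I sc k}) \<and> (\<forall>k. x (Suc k) \<subseteq> x k)}"

definition Lambda_zero :: "'r::comm_ring_1 set \<Rightarrow> ('r \<Rightarrow> 'm::ab_group_add \<Rightarrow> 'm) \<Rightarrow> nat \<Rightarrow> 'm set" where
  "Lambda_zero I sc = (\<lambda>k. powM I sc k)"

definition Lambda_add :: "(nat \<Rightarrow> 'm::ab_group_add set) \<Rightarrow> (nat \<Rightarrow> 'm set) \<Rightarrow> nat \<Rightarrow> 'm set" where
  "Lambda_add x y = (\<lambda>k. {a + b |a b. a \<in> x k \<and> b \<in> y k})"

definition Lambda_scale :: "'r::comm_ring_1 set \<Rightarrow> ('r \<Rightarrow> 'm::ab_group_add \<Rightarrow> 'm) \<Rightarrow> 'r \<Rightarrow> (nat \<Rightarrow> 'm set) \<Rightarrow> nat \<Rightarrow> 'm set" where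
  "Lambda_scale I sc r x = (\<lambda>k. {sc r a + c |a c. a \<in> x k \<and> c \<in> powM I sc k})"

end

theory Submission
  imports Defs
begin

lemma ismul_add:
  fixes N :: "'m::ab_group_add set"
  assumes "x \<in> ideal_smul I sc (+) 0 N" "y \<in> ideal_smul I sc (+) 0 N"
  shows "x + y \<in> ideal_smul I sc (+) 0 N"
  using assms(1)
proof induction
  case zero then show ?case using assms(2) by simp
next
  case (step a m x)
  then show ?case by (metis add.assoc ideal_smul.step)
qed

lemma ismul_mono:
  assumes "x \<in> ideal_smul I sc ad z N" "N \<subseteq> N'"
  shows "x \<in> ideal_smul I sc ad z N'"
  using assms by induction (auto intro: ideal_smul.intros)

lemma powM_univ:
  fixes sc :: "'r::comm_ring_1 \<Rightarrow> 'm::ab_group_add \<Rightarrow> 'm"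
  assumes ms: "module sc" and IM: "ideal_smul I sc (+) 0 UNIV = UNIV"
  shows "powM I sc k = UNIV"
proof (induction k)
  case 0
  have "m \<in> ideal_smul UNIV sc (+) 0 UNIV" for m
  proof -
    have "sc 1 m + 0 \<in> ideal_smul UNIV sc (+) 0 UNIV" by (intro ideal_smul.intros) auto
    then show ?thesis by (simp add: module.scale_one[OF ms])
  qed
  then show ?case unfolding powM_def by auto
next
  case (Suc k)
  define J where "J = ideal_pow I k"
  define J' where "J' = ideal_smul I (*) (+) 0 J"
  have JM: "ideal_smul J sc (+) 0 UNIV = UNIV" using Suc unfolding powM_def J_def .
  have key: "sc a y \<in> ideal_smul J' sc (+) 0 UNIV" if a: "a \<in> I" and y: "y \<in> ideal_smul J sc (+) 0 UNIV" for a y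
    using y
  proof induction
    case zero then show ?case by (simp add: module.scale_zero_right[OF ms] ideal_smul.zero)
  next
    case (step b m x)
    have "a * b + 0 \<in> J'" unfolding J'_def using a step(1) by (intro ideal_smul.intros) auto
    then have ab: "a * b \<in> J'" by simp
    have "sc a (sc b m + x) = sc (a*b) m + sc a x"
      by (simp add: module.scale_right_distrib[OF ms] module.scale_scale[OF ms])
    then show ?case using ideal_smul.step[OF ab UNIV_I step(4)] by simp
  qed
  have "m \<in> ideal_smul J' sc (+) 0 UNIV" for m
  proof -
    have "m \<in> ideal_smul I sc (+) 0 UNIV" using IM by simp
    then show ?thesis
    proof induction
      case zero then show ?case by (rule ideal_smul.zero)
    next
      case (step a m x)
      then show ?case using key[of a m] JM by (simp add: ismul_add)
    qed
  qed
  then show ?case unfolding powM_def J'_def J_def by auto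
qed

theorem mainTheorem3:
  fixes I :: "'r::comm_ring_1 set" and sc :: "'r \<Rightarrow> 'm::ab_group_add \<Rightarrow> 'm"
  assumes "is_ideal I" and "module sc"
  shows "(I_prime I sc (+) 0 UNIV \<longrightarrow> I_coprime I sc (+) 0 (Gamma I sc))
       \<and> (I_coprime I sc (+) 0 UNIV \<longrightarrow>
            I_prime I (Lambda_scale I sc) Lambda_add (Lambda_zero I sc) (Lambda I sc))"
proof (intro conjI impI)
  note ms = assms(2)
  assume P: "I_prime I sc (+) 0 UNIV"
  show "I_coprime I sc (+) 0 (Gamma I sc)"
  proof (cases "ideal_smul I sc (+) 0 UNIV = {0}")
    case True
    have "ideal_smul I sc (+) 0 (Gamma I sc) \<subseteq> {0}"
      using ismul_mono[of _ I sc "(+)" 0 "Gamma I sc" UNIV] True by blast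
    moreover have "0 \<in> ideal_smul I sc (+) 0 (Gamma I sc)" by (rule ideal_smul.zero)
    ultimately show ?thesis unfolding I_coprime_def by blast
  next
    case False
    have tf: "\<And>m. (\<forall>a\<in>I. sc a m = 0) \<Longrightarrow> m = 0" using P False unfolding I_prime_def by blast
    have kill: "\<forall>m. (\<forall>a\<in>ideal_pow I k. sc a m = 0) \<longrightarrow> m = 0" for k
    proof (induction k)
      case 0 then show ?case by (metis UNIV_I ideal_pow.simps(1) module.scale_one[OF ms])
    next
      case (Suc k)
      show ?case
      proof (intro allI impI)
        fix m assume h: "\<forall>a\<in>ideal_pow I (Suc k). sc a m = 0"
        have "sc b m = 0" if b: "b \<in> ideal_pow I k" for b
        proof (rule tf, intro ballI)
          fix a assume a: "a \<in> I"
          have "a * b + 0 \<in> ideal_pow I (Suc k)"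
            using a b unfolding ideal_pow.simps by (intro ideal_smul.intros) auto
          then have "a * b \<in> ideal_pow I (Suc k)" by simp
          then show "sc a (sc b m) = 0" using h by (simp add: module.scale_scale[OF ms])
        qed
        then show "m = 0" using Suc by blast
      qed
    qed
    have G: "Gamma I sc \<subseteq> {0}" unfolding Gamma_def using kill by blast
    have "x = 0" if "x \<in> ideal_smul I sc (+) 0 (Gamma I sc)" for x
      using that
    proof induction
      case zero then show ?case by simp
    next
      case (step a m x) then show ?case using G by (auto simp: module.scale_zero_right[OF ms])
    qed
    moreover have "0 \<in> ideal_smul I sc (+) 0 (Gamma I sc)" by (rule ideal_smul.zero)
    ultimately show ?thesis unfolding I_coprime_def by blast
  qed
next
  note ms = assms(2)
  assume C: "I_coprime I sc (+) 0 UNIV"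
  show "I_prime I (Lambda_scale I sc) Lambda_add (Lambda_zero I sc) (Lambda I sc)"
  proof (cases "ideal_smul I sc (+) 0 UNIV = {0}")
    case True
    have z0: "sc a m = 0" if "a \<in> I" for a m
    proof -
      have "sc a m + 0 \<in> ideal_smul I sc (+) 0 UNIV" using that by (intro ideal_smul.intros) auto
      then show ?thesis using True by simp
    qed
    have sz: "Lambda_scale I sc a y = Lambda_zero I sc" if a: "a \<in> I" and y: "y \<in> Lambda I sc" for a y
    proof
      fix k
      from y obtain m where yk: "y k = {m + c |c. c \<in> powM I sc k}" unfolding Lambda_def by blast
      have "0 \<in> powM I sc k" unfolding powM_def by (rule ideal_smul.zero)
      then have my: "m \<in> y k" using yk by force
      have "Lambda_scale I sc a y k = {c | a' c. a' \<in> y k \<and> c \<in> powM I sc k}"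
        unfolding Lambda_scale_def using z0[OF a] by simp
      then show "Lambda_scale I sc a y k = Lambda_zero I sc k"
        unfolding Lambda_zero_def using my by blast
    qed
    have zz: "Lambda_add (Lambda_zero I sc) (Lambda_zero I sc) = Lambda_zero I sc"
    proof
      fix k
      have "c \<in> {a + b |a b. a \<in> powM I sc k \<and> b \<in> powM I sc k}" if "c \<in> powM I sc k" for c
      proof -
        have "0 \<in> powM I sc k" unfolding powM_def by (rule ideal_smul.zero)
        moreover have "c = 0 + c" by simp
        ultimately show ?thesis using that by blast
      qed
      moreover have "a + b \<in> powM I sc k" if "a \<in> powM I sc k" "b \<in> powM I sc k" for a b
        using that ismul_add unfolding powM_def by blast
      ultimately show "Lambda_add (Lambda_zero I sc) (Lambda_zero I sc) k = Lambda_zero I sc k"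
        unfolding Lambda_add_def Lambda_zero_def by blast
    qed
    have "x = Lambda_zero I sc" if "x \<in> ideal_smul I (Lambda_scale I sc) Lambda_add (Lambda_zero I sc) (Lambda I sc)" for x
      using that
    proof induction
      case zero then show ?case by simp
    next
      case (step a m x) then show ?case using sz zz by simp
    qed
    moreover have "Lambda_zero I sc \<in> ideal_smul I (Lambda_scale I sc) Lambda_add (Lambda_zero I sc) (Lambda I sc)"
      by (rule ideal_smul.zero)
    ultimately show ?thesis unfolding I_prime_def by blast
  next
    case False
    then have IM: "ideal_smul I sc (+) 0 UNIV = UNIV" using C unfolding I_coprime_def by blast
    have pU: "powM I sc k = UNIV" for k using powM_univ[OF ms IM] .
    have "x = Lambda_zero I sc" if "x \<in> Lambda I sc" for x
    proof
      fix k
      from that obtain m where "x k = {m + c |c. c \<in> powM I sc k}" unfolding Lambda_def by blast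
      then have xk: "x k = {m + c |c. True}" using pU by simp
      have "y \<in> x k" for y
      proof -
        have "y = m + (y - m)" by simp
        then show ?thesis unfolding xk by blast
      qed
      then have "x k = UNIV" by blast
      then show "x k = Lambda_zero I sc k" unfolding Lambda_zero_def using pU by simp
    qed
    then show ?thesis unfolding I_prime_def by blast
  qed
qed

end
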